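(* For every $n\geq1$, $A_n(A_n^{n+1}-2A_n^n-2J_n)=0$.
   Context: For $\kappa\in(0,1/2)$, the paired tent map $T_\kappa:[-1,1]\to[-1,1]$ is $T_\kappa(x)=2(1+\kappa)(x+1)-1$ for $x\in[-1,-1/2]$, $T_\kappa(x)=-2(1+\kappa)x-1$ for $x\in[-1/2,0)$, $T_\kappa(0)=0$, $T_\kappa(x)=-2(1+\kappa)x+1$ for $x\in(0,1/2]$, $T_\kappa(x)=2(1+\kappa)(x-1)+1$ for $x\in[1/2,1]$. For $n\geq1$, $\kappa_n$ is the unique solution in $(0,1/2)$ of $(2+2\kappa)^n\kappa=1$, and $T_n=T_{\kappa_n}$. Let $r_0<\dots<r_{2n+4}$ enumerate increasingly the $2n+5$ distinct points of $\{-1,-1/2,0,1/2,1\}\cup\{T_n^i(\pm\kappa_n):0\le i\le n-1\}$ and $R_i=(r_{i-1},r_i)$. $A_n$ is the $(2n+4)\times(2n+4)$ matrix with $a_{ij}=1$ if $R_i\subset T_n(R_j)$ and $0$ otherwise. With $e_i$ the standard basis of $\mathbb C^{2n+4}$, $J_n$ is the permutation matrix with $J_ne_i=e_{2n+5-i}$. *)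

theory Defs
  imports Complex_Main "Jordan_Normal_Form.Matrix"
begin

definition paired_tent :: "real \<Rightarrow> real \<Rightarrow> real" where
  "paired_tent \<kappa> x =
     (if x \<le> -1/2 then 2*(1+\<kappa>)*(x+1) - 1
      else if x < 0 then -2*(1+\<kappa>)*x - 1
      else if x = 0 then 0
      else if x \<le> 1/2 then -2*(1+\<kappa>)*x + 1
      else 2*(1+\<kappa>)*(x-1) + 1)"

definition kappa :: "nat \<Rightarrow> real" where
  "kappa n = (THE \<kappa>. 0 < \<kappa> \<and> \<kappa> < 1/2 \<and> (2 + 2*\<kappa>)^n * \<kappa> = 1)"

definition Tn :: "nat \<Rightarrow> real \<Rightarrow> real" where
  "Tn n = paired_tent (kappa n)"

definition partition_pts :: "nat \<Rightarrow> real set" where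
  "partition_pts n = {-1, -1/2, 0, 1/2, 1}
     \<union> {(Tn n ^^ i) (kappa n) | i. i < n}
     \<union> {(Tn n ^^ i) (- kappa n) | i. i < n}"

definition r :: "nat \<Rightarrow> nat \<Rightarrow> real" where
  "r n i = sorted_list_of_set (partition_pts n) ! i"

text \<open>R_i = (r_{i-1}, r_i), for 1 \<le> i \<le> 2n+4.\<close>
definition R :: "nat \<Rightarrow> nat \<Rightarrow> real set" where
  "R n i = {r n (i - 1) <..< r n i}"

text \<open>The transition matrix A_n; Isabelle matrices are 0-indexed, so entry (i,j)
  corresponds to the paper's a_{i+1,j+1}.\<close>
definition A :: "nat \<Rightarrow> complex mat" where
  "A n = mat (2*n+4) (2*n+4)
     (\<lambda>(i,j). if R n (i+1) \<subseteq> Tn n ` R n (j+1) then 1 else 0)"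

text \<open>J_n e_i = e_{2n+5-i} (1-indexed), i.e. 0-indexed entry (i,j) is 1 iff i+j = 2n+3.\<close>
definition J :: "nat \<Rightarrow> complex mat" where
  "J n = mat (2*n+4) (2*n+4) (\<lambda>(i,j). if i + j = 2*n+3 then 1 else 0)"

end

theory Submission
  imports Defs "HOL-Library.Function_Algebras"
begin

definition Fm :: "nat \<Rightarrow> nat \<Rightarrow> nat" where
  "Fm n i = (if i = 0 then 0 else if i = n then n+3 else if i = n-1 then n+2 else i+1)"
definition Gm :: "nat \<Rightarrow> nat \<Rightarrow> nat" where
  "Gm n i = (if i = n then n+3 else if i = n+1 then (if n = 1 then 3 else 1) else 0)"
definition lo0 :: "nat \<Rightarrow> nat \<Rightarrow> nat" where
  "lo0 n j = (if j < n then Fm n j else if j = n then Gm n (n+1) else Gm n (n+2))"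
definition hi0 :: "nat \<Rightarrow> nat \<Rightarrow> nat" where
  "hi0 n j = (if j < n then Fm n (j+1) else if j = n then Gm n n else Gm n (n+1))"
definition lo :: "nat \<Rightarrow> nat \<Rightarrow> nat" where
  "lo n j = (if j < n+2 then lo0 n j else 2*n+4 - hi0 n (2*n+3-j))"
definition hi :: "nat \<Rightarrow> nat \<Rightarrow> nat" where
  "hi n j = (if j < n+2 then hi0 n j else 2*n+4 - lo0 n (2*n+3-j))"

definition iv :: "nat \<Rightarrow> nat \<Rightarrow> nat \<Rightarrow> complex" where
  "iv a b = (\<lambda>i. if a \<le> i \<and> i < b then 1 else 0)"

definition Bop :: "nat \<Rightarrow> (nat \<Rightarrow> complex) \<Rightarrow> nat \<Rightarrow> complex" where
  "Bop n f = (\<lambda>i. \<Sum>j<2*n+4. if lo n j \<le> i \<and> i < hi n j then f j else 0)"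

definition Jop :: "nat \<Rightarrow> (nat \<Rightarrow> complex) \<Rightarrow> nat \<Rightarrow> complex" where
  "Jop n f = (\<lambda>i. if i < 2*n+4 then f (2*n+3-i) else 0)"

lemma Fm_ne: "n \<ge> 1 \<Longrightarrow> i \<le> n \<Longrightarrow> Fm n i \<noteq> n \<and> Fm n i \<noteq> n+4 \<and> Fm n i \<le> n+3"
  unfolding Fm_def by auto
lemma Gm_ne: "n \<ge> 1 \<Longrightarrow> Gm n i \<noteq> n \<and> Gm n i \<noteq> n+4 \<and> Gm n i \<le> n+3"
  unfolding Gm_def by auto
lemma lo0_hi0: assumes "n \<ge> 1" "j < n+2"
  shows "lo0 n j \<le> hi0 n j"
proof -
  consider "j < n" | "j = n" | "j = n+1" using assms by linarith
  then show ?thesis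
  proof cases
    case 1 then show ?thesis unfolding lo0_def hi0_def Fm_def by auto
  next
    case 2 then show ?thesis unfolding lo0_def hi0_def Gm_def by auto
  next
    case 3 then show ?thesis unfolding lo0_def hi0_def Gm_def by auto
  qed
qed
lemma lo0_ne: "n \<ge> 1 \<Longrightarrow> j < n+2 \<Longrightarrow> lo0 n j \<noteq> n \<and> lo0 n j \<noteq> n+4 \<and> lo0 n j \<le> n+3"
  unfolding lo0_def using Fm_ne[of n j] Gm_ne[of n] by auto
lemma hi0_ne: "n \<ge> 1 \<Longrightarrow> j < n+2 \<Longrightarrow> hi0 n j \<noteq> n \<and> hi0 n j \<noteq> n+4 \<and> hi0 n j \<le> n+3"
  unfolding hi0_def using Fm_ne[of n "j+1"] Gm_ne[of n] by auto

lemma lohi_bounds: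
  assumes "n \<ge> 1" "j < 2*n+4"
  shows "lo n j \<le> hi n j" "hi n j \<le> 2*n+4"
    "lo n j \<noteq> n" "lo n j \<noteq> n+4" "hi n j \<noteq> n" "hi n j \<noteq> n+4"
proof -
  have "lo n j \<le> hi n j \<and> hi n j \<le> 2*n+4 \<and> lo n j \<noteq> n \<and> lo n j \<noteq> n+4 \<and> hi n j \<noteq> n \<and> hi n j \<noteq> n+4"
  proof (cases "j < n+2")
    case True
    then show ?thesis using lo0_hi0[OF assms(1) True] lo0_ne[OF assms(1) True] hi0_ne[OF assms(1) True]
      unfolding lo_def hi_def by simp
  next
    case False
    define k where "k = 2*n+3-j"
    have k: "k < n+2" using False assms(2) unfolding k_def by simp
    have "lo n j = 2*n+4 - hi0 n k" "hi n j = 2*n+4 - lo0 n k"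
      using False unfolding lo_def hi_def k_def by auto
    moreover have "lo0 n k \<le> hi0 n k" using lo0_hi0[OF assms(1) k] .
    moreover have "lo0 n k \<noteq> n \<and> lo0 n k \<noteq> n+4 \<and> lo0 n k \<le> n+3" using lo0_ne[OF assms(1) k] .
    moreover have "hi0 n k \<noteq> n \<and> hi0 n k \<noteq> n+4 \<and> hi0 n k \<le> n+3" using hi0_ne[OF assms(1) k] .
    ultimately show ?thesis by arith
  qed
  then show "lo n j \<le> hi n j" "hi n j \<le> 2*n+4"
    "lo n j \<noteq> n" "lo n j \<noteq> n+4" "hi n j \<noteq> n" "hi n j \<noteq> n+4" by auto
qed

lemma lohi0_le: "lo0 n j \<le> n+3" "hi0 n j \<le> n+3"
  by (auto simp: lo0_def hi0_def Fm_def Gm_def)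

lemma lo_sym: "j < 2*n+4 \<Longrightarrow> lo n (2*n+3-j) = 2*n+4 - hi n j"
  and hi_sym: "j < 2*n+4 \<Longrightarrow> hi n (2*n+3-j) = 2*n+4 - lo n j"
  using lohi0_le[of n "2*n+3-j"] by (auto simp: lo_def hi_def)

lemma Bop_add: "Bop n (f + g) = Bop n f + Bop n g"
  unfolding Bop_def by (rule ext) (auto simp: sum.distrib[symmetric] intro!: sum.cong)
lemma Bop_diff: "Bop n (f - g) = Bop n f - Bop n g"
  unfolding Bop_def by (rule ext) (auto simp: sum_subtractf[symmetric] intro!: sum.cong)
lemma Bop_scale: "Bop n (2 * f) = 2 * Bop n f"
  unfolding Bop_def by (rule ext) (auto simp: sum_distrib_left intro!: sum.cong)

lemma Bpow_add: "(Bop n ^^ m) (f + g) = (Bop n ^^ m) f + (Bop n ^^ m) g"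
  by (induct m) (simp_all only: funpow.simps comp_apply Bop_add id_apply)
lemma Bpow_diff: "(Bop n ^^ m) (f - g) = (Bop n ^^ m) f - (Bop n ^^ m) g"
  by (induct m) (simp_all only: funpow.simps comp_apply Bop_diff id_apply)
lemma Bpow_scale: "(Bop n ^^ m) (2 * f) = 2 * (Bop n ^^ m) f"
  by (induct m) (simp_all only: funpow.simps comp_apply Bop_scale id_apply)

lemma Bop_col: "j < 2*n+4 \<Longrightarrow> Bop n (iv j (Suc j)) = iv (lo n j) (hi n j)"
proof
  fix i assume j: "j < 2*n+4"
  have "Bop n (iv j (Suc j)) i = (\<Sum>k<2*n+4. if k = j then (if lo n j \<le> i \<and> i < hi n j then 1 else 0) else 0)"
    unfolding Bop_def iv_def by (intro sum.cong) auto
  also have "\<dots> = iv (lo n j) (hi n j) i" using j by (simp add: iv_def)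
  finally show "Bop n (iv j (Suc j)) i = iv (lo n j) (hi n j) i" .
qed

lemma iv_split: "a \<le> b \<Longrightarrow> b \<le> c \<Longrightarrow> iv a c = iv a b + iv b c"
  by (auto simp: iv_def)

lemma Bop_iv_sum: "a \<le> b \<Longrightarrow> b \<le> 2*n+4 \<Longrightarrow> Bop n (iv a b) = (\<Sum>j\<in>{a..<b}. iv (lo n j) (hi n j))"
proof (induct b rule: dec_induct)
  case base
  have "Bop n (iv a a) = 0" unfolding Bop_def iv_def by (auto simp: fun_eq_iff intro!: sum.neutral)
  then show ?case by simp
next
  case (step m)
  have "Bop n (iv a (Suc m)) = Bop n (iv a m) + Bop n (iv m (Suc m))"
    using step by (simp add: iv_split[of a m "Suc m"] Bop_add)
  then show ?case using step by (simp add: Bop_col)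
qed

lemma iv_empty: "iv a a = 0"
  unfolding iv_def by (rule ext) simp

lemma Fm_mono: "a \<le> b \<Longrightarrow> b \<le> n \<Longrightarrow> n \<ge> 1 \<Longrightarrow> Fm n a \<le> Fm n b"
  unfolding Fm_def by auto

lemma Bop_lap1:
  assumes "n \<ge> 1" "a \<le> b" "b \<le> n"
  shows "Bop n (iv a b) = iv (Fm n a) (Fm n b)"
  using assms(2,3)
proof (induct b rule: dec_induct)
  case base
  have "Bop n (iv a a) = 0" unfolding Bop_def iv_def by (auto simp: fun_eq_iff intro!: sum.neutral)
  then show ?case by (simp only: iv_empty)
next
  case (step m)
  have "Bop n (iv a (Suc m)) = Bop n (iv a m) + Bop n (iv m (Suc m))"
    using step by (simp add: iv_split[of a m "Suc m"] Bop_add)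
  also have "\<dots> = iv (Fm n a) (Fm n m) + iv (Fm n m) (Fm n (Suc m))"
    using step by (simp add: Bop_col lo_def hi_def lo0_def hi0_def)
  also have "\<dots> = iv (Fm n a) (Fm n (Suc m))"
    using step assms(1) by (intro iv_split[symmetric] Fm_mono) auto
  finally show ?case .
qed

lemma Jop_iv: "a \<le> b \<Longrightarrow> b \<le> 2*n+4 \<Longrightarrow> Jop n (iv a b) = iv (2*n+4-b) (2*n+4-a)"
  by (auto simp: Jop_def iv_def fun_eq_iff)

lemma Jop_add: "Jop n (f + g) = Jop n f + Jop n g"
  by (auto simp: Jop_def fun_eq_iff)
lemma Jop_diff: "Jop n (f - g) = Jop n f - Jop n g"
  by (auto simp: Jop_def fun_eq_iff)
lemma Jop_scale: "Jop n (2 * f) = 2 * Jop n f"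
  by (auto simp: Jop_def fun_eq_iff)

lemma Bop_Jop: assumes "n \<ge> 1" shows "Bop n (Jop n f) = Jop n (Bop n f)"
proof
  fix i
  let ?N = "2*n+4"
  have "Bop n (Jop n f) i = (\<Sum>j<?N. if lo n (?N - Suc j) \<le> i \<and> i < hi n (?N - Suc j) then Jop n f (?N - Suc j) else 0)"
    unfolding Bop_def by (rule sum.nat_diff_reindex[symmetric])
  also have "\<dots> = (\<Sum>j<?N. if lo n j \<le> 2*n+3-i \<and> 2*n+3-i < hi n j \<and> i < ?N then f j else 0)"
  proof (intro sum.cong refl)
    fix j assume j: "j \<in> {..<?N}"
    have e: "?N - Suc j = 2*n+3-j" by simp
    show "(if lo n (?N - Suc j) \<le> i \<and> i < hi n (?N - Suc j) then Jop n f (?N - Suc j) else 0) =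
      (if lo n j \<le> 2*n+3-i \<and> 2*n+3-i < hi n j \<and> i < ?N then f j else 0)"
    proof -
      have jN: "j < ?N" using j by simp
      have l1: "lo n (?N - Suc j) = ?N - hi n j" using lo_sym[OF jN] e by simp
      have h1: "hi n (?N - Suc j) = ?N - lo n j" using hi_sym[OF jN] e by simp
      have b: "lo n j \<le> hi n j" "hi n j \<le> ?N" using lohi_bounds[OF assms jN] by auto
      have jf: "Jop n f (?N - Suc j) = f j" using jN unfolding Jop_def by simp
      have iff: "(?N - hi n j \<le> i \<and> i < ?N - lo n j) \<longleftrightarrow> (lo n j \<le> 2*n+3-i \<and> 2*n+3-i < hi n j \<and> i < ?N)"
        using b by arith
      show ?thesis unfolding l1 h1 jf iff ..
    qed
  qed
  also have "\<dots> = Jop n (Bop n f) i"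
    by (auto simp: Jop_def Bop_def intro!: sum.neutral)
  finally show "Bop n (Jop n f) i = Jop n (Bop n f) i" .
qed

lemma Bpow_Jop: "n \<ge> 1 \<Longrightarrow> (Bop n ^^ m) (Jop n f) = Jop n ((Bop n ^^ m) f)"
  by (induct m) (simp_all add: Bop_Jop)

definition Q :: "nat \<Rightarrow> (nat \<Rightarrow> complex) \<Rightarrow> nat \<Rightarrow> complex" where
  "Q n f = (Bop n ^^ (n+1)) f - 2 * (Bop n ^^ n) f - 2 * Jop n f"

lemma Q_add: "Q n (f + g) = Q n f + Q n g"
  unfolding Q_def Bpow_add Jop_add by (simp only: algebra_simps)
lemma Q_diff: "Q n (f - g) = Q n f - Q n g"
  unfolding Q_def Bpow_diff Jop_diff by (simp only: algebra_simps)
lemma Q_Jop: "n \<ge> 1 \<Longrightarrow> Q n (Jop n f) = Jop n (Q n f)"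
  unfolding Q_def Jop_diff Jop_scale by (simp only: Bpow_Jop)

lemma Q_zero: "Q n 0 = 0"
proof -
  have b: "Bop n 0 = 0" unfolding Bop_def zero_fun_def by simp
  have "(Bop n ^^ m) 0 = 0" for m by (induct m) (simp_all only: funpow.simps comp_apply b id_apply)
  moreover have "Jop n 0 = 0" unfolding Jop_def zero_fun_def by simp
  ultimately show ?thesis unfolding Q_def by (simp only: mult_zero_right diff_zero)
qed

lemma Fm_vals: assumes "n \<ge> 2"
  shows "Fm n 0 = 0" "Fm n (n-1) = n+2" "Fm n n = n+3" "1 \<le> i \<Longrightarrow> i \<le> n-2 \<Longrightarrow> Fm n i = i+1"
  using assms unfolding Fm_def by auto

lemma col_vals: assumes "n \<ge> 2"
  shows "Bop n (iv n (Suc n)) = iv 1 (n+3)"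
    "Bop n (iv (n+1) (n+2)) = iv 0 1"
    "Bop n (iv (n+2) (n+3)) = iv (2*n+3) (2*n+4)"
proof -
  show "Bop n (iv n (Suc n)) = iv 1 (n+3)"
    using Bop_col[of n n] assms by (simp add: lo_def hi_def lo0_def hi0_def Gm_def)
  show "Bop n (iv (n+1) (n+2)) = iv 0 1"
    using Bop_col[of "n+1" n] assms by (simp add: lo_def hi_def lo0_def hi0_def Gm_def)
  have "lo n (n+2) = 2*n+3" "hi n (n+2) = 2*n+4"
    using assms by (simp_all add: lo_def hi_def lo0_def hi0_def Gm_def)
  moreover have "Bop n (iv (n+2) (Suc (n+2))) = iv (lo n (n+2)) (hi n (n+2))"
    by (rule Bop_col) simp
  moreover have "Suc (n+2) = n+3" by simp
  ultimately show "Bop n (iv (n+2) (n+3)) = iv (2*n+3) (2*n+4)" by metis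
qed

lemma f1: "n \<ge> 2 \<Longrightarrow> Bop n (iv 0 (n-1)) = iv 0 (n+2)"
  using Bop_lap1[of n 0 "n-1"] Fm_vals[of n] by simp

lemma f2: assumes "n \<ge> 2" shows "Bop n (iv 0 (n+2)) = 2 * iv 0 (n+3)"
proof -
  have "iv 0 (n+2) = iv 0 n + iv n (Suc n) + iv (n+1) (n+2)" by (auto simp: iv_def fun_eq_iff)
  then have "Bop n (iv 0 (n+2)) = iv 0 (n+3) + iv 1 (n+3) + iv 0 1"
    using Bop_lap1[of n 0 n] Fm_vals[OF assms] col_vals[OF assms] assms by (simp add: Bop_add)
  also have "\<dots> = 2 * iv 0 (n+3)" by (auto simp: iv_def fun_eq_iff)
  finally show ?thesis .
qed

lemma f3: assumes "n \<ge> 2" shows "Bop n (iv 0 (n+3)) = 2 * iv 0 (n+3) + iv (2*n+3) (2*n+4)"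
proof -
  have "iv 0 (n+3) = iv 0 (n+2) + iv (n+2) (n+3)" by (auto simp: iv_def fun_eq_iff)
  then show ?thesis using f2[OF assms] col_vals[OF assms] by (simp add: Bop_add)
qed

lemma f6: assumes "n \<ge> 2" shows "Bop n (iv (n-1) (n+2)) = iv (n+2) (n+3) + iv 0 (n+3)"
proof -
  have "iv (n-1) (n+2) = iv (n-1) n + iv n (Suc n) + iv (n+1) (n+2)" by (auto simp: iv_def fun_eq_iff)
  then have "Bop n (iv (n-1) (n+2)) = iv (n+2) (n+3) + iv 1 (n+3) + iv 0 1"
    using Bop_lap1[of n "n-1" n] Fm_vals[OF assms] col_vals[OF assms] assms by (simp add: Bop_add)
  also have "\<dots> = iv (n+2) (n+3) + iv 0 (n+3)" by (auto simp: iv_def fun_eq_iff)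
  finally show ?thesis .
qed

lemma f7: assumes "n \<ge> 2" shows "Bop n (iv (n-1) (n+1)) = iv (n+2) (n+3) + iv 1 (n+3)"
proof -
  have "iv (n-1) (n+1) = iv (n-1) n + iv n (Suc n)" by (auto simp: iv_def fun_eq_iff)
  then show ?thesis
    using Bop_lap1[of n "n-1" n] Fm_vals[OF assms] col_vals[OF assms] assms by (simp add: Bop_add)
qed

lemma f8: assumes "n \<ge> 3" shows "Bop n (iv (n-2) (n-1)) = iv (n-1) (n+2)"
proof -
  have "Suc (n-2) = n-1" using assms by arith
  then show ?thesis using Bop_lap1[of n "n-2" "n-1"] Fm_vals[of n] assms by simp
qed

lemma C1: assumes "n \<ge> 2" "m \<le> n-2" shows "(Bop n ^^ m) (iv 0 1) = iv 0 (m+1)"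
  using assms(2)
proof (induct m)
  case 0 then show ?case by simp
next
  case (Suc m)
  have "(Bop n ^^ Suc m) (iv 0 1) = Bop n (iv 0 (m+1))" using Suc by simp
  also have "\<dots> = iv 0 (Suc m + 1)"
    using Bop_lap1[of n 0 "m+1"] Fm_vals[OF assms(1)] Suc assms by simp
  finally show ?case .
qed

lemma C2: assumes "n \<ge> 2" "1 \<le> i" "i + m \<le> n-2"
  shows "(Bop n ^^ m) (iv i (Suc i)) = iv (i+m) (Suc (i+m))"
  using assms(3)
proof (induct m)
  case 0 then show ?case by simp
next
  case (Suc m)
  have "(Bop n ^^ Suc m) (iv i (Suc i)) = Bop n (iv (i+m) (Suc (i+m)))" using Suc by simp
  also have "\<dots> = iv (i + Suc m) (Suc (i + Suc m))"
    using Bop_lap1[of n "i+m" "Suc (i+m)"] Fm_vals[OF assms(1)] Suc assms by simp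
  finally show ?case .
qed

lemma E1: assumes "n \<ge> 2" shows "(Bop n ^^ (n-1)) (iv 0 1) = iv 0 (n+2)"
proof -
  have "n - 1 = Suc (n-2)" using assms by simp
  then have "(Bop n ^^ (n-1)) (iv 0 1) = Bop n ((Bop n ^^ (n-2)) (iv 0 1))" by simp
  also have "\<dots> = Bop n (iv 0 (n-1))" using C1[OF assms, of "n-2"] assms
    by (simp add: Suc_diff_Suc numeral_2_eq_2)
  finally show ?thesis using f1[OF assms] by simp
qed

lemma E2: assumes "n \<ge> 2" shows "(Bop n ^^ n) (iv 0 1) = 2 * iv 0 (n+3)"
proof -
  have "n = Suc (n-1)" using assms by simp
  then have "(Bop n ^^ n) (iv 0 1) = Bop n ((Bop n ^^ (n-1)) (iv 0 1))" by (metis comp_apply funpow.simps(2))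
  then show ?thesis using E1[OF assms] f2[OF assms] by simp
qed

lemma E3: assumes "n \<ge> 2" shows "(Bop n ^^ (n+1)) (iv 0 1) = 2 * (2 * iv 0 (n+3) + iv (2*n+3) (2*n+4))"
proof -
  have "(Bop n ^^ (n+1)) (iv 0 1) = Bop n ((Bop n ^^ n) (iv 0 1))" by simp
  then show ?thesis using E2[OF assms] f3[OF assms] by (simp add: Bop_scale)
qed

lemma Q_e0: assumes "n \<ge> 2" shows "Q n (iv 0 1) = 0"
proof -
  have "Jop n (iv 0 1) = iv (2*n+3) (2*n+4)" by (auto simp: Jop_def iv_def fun_eq_iff)
  then show ?thesis unfolding Q_def E3[OF assms] E2[OF assms] by (simp add: fun_eq_iff algebra_simps)
qed

lemma pow_split: "a + b = m \<Longrightarrow> (Bop n ^^ m) f = (Bop n ^^ a) ((Bop n ^^ b) f)"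
  by (metis funpow_add comp_apply)

lemma pow_Suc: "(Bop n ^^ Suc m) f = Bop n ((Bop n ^^ m) f)"
  by simp

definition Wv :: "nat \<Rightarrow> nat \<Rightarrow> complex" where
  "Wv n = iv (n+2) (n+3) + iv 0 (n+3)"

lemma BW: assumes "n \<ge> 2"
  shows "Bop n (Wv n) - 2 * Wv n = 2 * Jop n (iv 0 1) - 2 * Jop n (iv (n+1) (n+2))"
proof -
  have "Bop n (Wv n) = iv (2*n+3) (2*n+4) + (2 * iv 0 (n+3) + iv (2*n+3) (2*n+4))"
    unfolding Wv_def Bop_add using col_vals[OF assms] f3[OF assms] by simp
  then show ?thesis unfolding Wv_def by (auto simp: Jop_def iv_def fun_eq_iff)
qed

lemma Bpow_en1: assumes "n \<ge> 2" "k \<ge> 1"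
  shows "(Bop n ^^ k) (iv (n+1) (n+2)) = (Bop n ^^ (k-1)) (iv 0 1)"
proof -
  have "k = Suc (k-1)" using assms by simp
  then have "(Bop n ^^ k) (iv (n+1) (n+2)) = (Bop n ^^ (k-1)) (Bop n (iv (n+1) (n+2)))"
    by (metis comp_apply funpow_Suc_right)
  then show ?thesis using col_vals[OF assms(1)] by simp
qed

lemma K: assumes "n \<ge> 2" "k \<ge> 1"
  shows "(Bop n ^^ k) (Bop n (Wv n) - 2 * Wv n) = 2 * Jop n ((Bop n ^^ k) (iv 0 1)) - 2 * Jop n ((Bop n ^^ (k-1)) (iv 0 1))"
proof -
  have n1: "n \<ge> 1" using assms by simp
  show ?thesis unfolding BW[OF assms(1)] Bpow_diff Bpow_scale Bpow_Jop[OF n1] Bpow_en1[OF assms] ..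
qed

lemma Q_ei: assumes "1 \<le> i" "i \<le> n - 2" "n \<ge> 2"
  shows "Q n (iv i (Suc i)) = 0"
proof -
  have n3: "n \<ge> 3" using assms by simp
  have h1: "(Bop n ^^ (n-2-i)) (iv i (Suc i)) = iv (n-2) (n-1)"
  proof -
    have "(Bop n ^^ (n-2-i)) (iv i (Suc i)) = iv (i + (n-2-i)) (Suc (i + (n-2-i)))"
      using C2[OF assms(3,1), of "n-2-i"] assms by simp
    moreover have "i + (n-2-i) = n-2" "Suc (n-2) = n-1" using assms n3 by arith+
    ultimately show ?thesis by simp
  qed
  have h2: "(Bop n ^^ (n-i)) (iv i (Suc i)) = Wv n"
  proof -
    have "n - i = Suc (Suc (n-2-i))" using assms by arith
    then have "(Bop n ^^ (n-i)) (iv i (Suc i)) = Bop n (Bop n ((Bop n ^^ (n-2-i)) (iv i (Suc i))))"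
      by simp
    also have "\<dots> = Wv n" unfolding h1 f8[OF n3] f6[OF assms(3)] Wv_def ..
    finally show ?thesis .
  qed
  have h3: "(Bop n ^^ (n+1)) (iv i (Suc i)) = (Bop n ^^ i) (Bop n (Wv n))"
  proof -
    have e: "i + Suc (n-i) = n + 1" using assms by arith
    show ?thesis unfolding pow_split[OF e] pow_Suc h2 by (rule refl)
  qed
  have h4: "(Bop n ^^ n) (iv i (Suc i)) = (Bop n ^^ i) (Wv n)"
  proof -
    have e: "i + (n-i) = n" using assms by arith
    show ?thesis unfolding pow_split[OF e] h2 by (rule refl)
  qed
  have "Q n (iv i (Suc i)) = (Bop n ^^ i) (Bop n (Wv n) - 2 * Wv n) - 2 * Jop n (iv i (Suc i))"
    unfolding Q_def h3 h4 Bpow_diff Bpow_scale ..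
  also have "\<dots> = 2 * Jop n (iv 0 (i+1)) - 2 * Jop n (iv 0 i) - 2 * Jop n (iv i (Suc i))"
    unfolding K[OF assms(3,1)] using C1[OF assms(3), of i] C1[OF assms(3), of "i-1"] assms by simp
  also have "\<dots> = 0" using assms by (auto simp: Jop_def iv_def fun_eq_iff)
  finally show ?thesis .
qed

lemma Q_en1: assumes "n \<ge> 2" shows "Q n (iv (n+1) (n+2)) = 0"
proof -
  have "Q n (iv (n+1) (n+2)) = 2 * iv 0 (n+3) - 2 * iv 0 (n+2) - 2 * Jop n (iv (n+1) (n+2))"
  proof -
    have "(Bop n ^^ (n+1)) (iv (n+1) (n+2)) = (Bop n ^^ n) (iv 0 1)"
      using Bpow_en1[OF assms, of "n+1"] by simp
    moreover have "(Bop n ^^ n) (iv (n+1) (n+2)) = (Bop n ^^ (n-1)) (iv 0 1)"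
      using Bpow_en1[OF assms, of "n"] assms by simp
    ultimately show ?thesis unfolding Q_def E1[OF assms] E2[OF assms] by simp
  qed
  also have "\<dots> = 0" by (auto simp: Jop_def iv_def fun_eq_iff)
  finally show ?thesis .
qed

lemma Q_u: assumes "n \<ge> 2" shows "Q n (iv (n-1) (n+1)) = 0"
proof -
  have bu: "Bop n (iv (n-1) (n+1)) = Wv n - iv 0 1"
    unfolding f7[OF assms] Wv_def by (auto simp: iv_def fun_eq_iff)
  have n1: "n - 1 \<ge> 1" using assms by simp
  have a1: "(Bop n ^^ (n+1)) (iv (n-1) (n+1)) = (Bop n ^^ (n-1)) (Bop n (Bop n (iv (n-1) (n+1))))"
  proof -
    have e: "(n-1) + Suc (Suc 0) = n + 1" using assms by arith
    show ?thesis unfolding pow_split[OF e] pow_Suc funpow_0 by (rule refl)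
  qed
  have a2: "(Bop n ^^ n) (iv (n-1) (n+1)) = (Bop n ^^ (n-1)) (Bop n (iv (n-1) (n+1)))"
  proof -
    have e: "(n-1) + Suc 0 = n" using assms by arith
    show ?thesis unfolding pow_split[OF e] pow_Suc funpow_0 by (rule refl)
  qed
  have a3: "(Bop n ^^ (n-1)) (Bop n (iv 0 1)) = (Bop n ^^ n) (iv 0 1)"
  proof -
    have "n = Suc (n-1)" using assms by simp
    then show ?thesis by (metis comp_apply funpow_Suc_right)
  qed
  have "Q n (iv (n-1) (n+1)) = (Bop n ^^ (n-1)) (Bop n (Wv n) - 2 * Wv n)
      - (Bop n ^^ (n-1)) (Bop n (iv 0 1)) + 2 * (Bop n ^^ (n-1)) (iv 0 1) - 2 * Jop n (iv (n-1) (n+1))"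
    unfolding Q_def a1 a2 bu Bop_diff Bpow_diff Bpow_scale by (simp add: algebra_simps)
  also have "\<dots> = 2 * Jop n (iv 0 (n+2)) - 2 * Jop n (iv 0 (n-1)) - 2 * iv 0 (n+3) + 2 * iv 0 (n+2)
      - 2 * Jop n (iv (n-1) (n+1))"
    unfolding K[OF assms n1] a3 E1[OF assms] E2[OF assms] using C1[OF assms, of "n-2"] assms
    by (simp add: numeral_2_eq_2 Suc_diff_Suc)
  also have "\<dots> = 0" using assms by (auto simp: Jop_def iv_def fun_eq_iff)
  finally show ?thesis .
qed

lemma n1_cols: "Bop 1 (iv 0 1) = iv 0 4" "Bop 1 (iv 1 2) = iv 3 4" "Bop 1 (iv 2 3) = iv 0 3"
  "Bop 1 (iv 3 4) = iv 3 6"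
proof -
  have c: "Bop 1 (iv j (Suc j)) = iv (lo 1 j) (hi 1 j)" if "j < 6" for j
    using Bop_col[of j 1] that by simp
  show "Bop 1 (iv 0 1) = iv 0 4" using c[of 0] by (simp add: lo_def hi_def lo0_def hi0_def Fm_def Gm_def eval_nat_numeral)
  show "Bop 1 (iv 1 2) = iv 3 4" using c[of 1] by (simp add: lo_def hi_def lo0_def hi0_def Fm_def Gm_def eval_nat_numeral)
  show "Bop 1 (iv 2 3) = iv 0 3" using c[of 2] by (simp add: lo_def hi_def lo0_def hi0_def Fm_def Gm_def eval_nat_numeral)
  show "Bop 1 (iv 3 4) = iv 3 6" using c[of 3] by (simp add: lo_def hi_def lo0_def hi0_def Fm_def Gm_def eval_nat_numeral)
qed

lemma Q1_a: "Q 1 (iv 0 2) = 0"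
proof -
  have s1: "iv 0 2 = iv 0 1 + iv 1 2" "iv 0 4 = iv 0 1 + iv 1 2 + iv 2 3 + iv 3 4"
    by (auto simp: iv_def fun_eq_iff)
  have b1: "Bop 1 (iv 0 2) = iv 0 4 + iv 3 4" unfolding s1(1) Bop_add n1_cols ..
  have b2: "Bop 1 (iv 0 4) = iv 0 4 + iv 3 4 + iv 0 3 + iv 3 6" unfolding s1(2) Bop_add n1_cols ..
  have p2: "(Bop 1 ^^ (1+1)) f = Bop 1 (Bop 1 f)" for f by (simp add: numeral_2_eq_2)
  have funpow_1: "(Bop 1 ^^ 1) f = Bop 1 f" for f by simp
  have "Q 1 (iv 0 2) = (iv 0 4 + iv 3 4 + iv 0 3 + iv 3 6) + iv 3 6 - 2 * (iv 0 4 + iv 3 4) - 2 * Jop 1 (iv 0 2)"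
    unfolding Q_def p2 funpow_1 b1 Bop_add b2 n1_cols ..
  also have "\<dots> = 0" by (auto simp: Jop_def iv_def fun_eq_iff)
  finally show ?thesis .
qed

lemma Q1_b: "Q 1 (iv 2 3) = 0"
proof -
  have s1: "iv 0 3 = iv 0 1 + iv 1 2 + iv 2 3"
    by (auto simp: iv_def fun_eq_iff)
  have b2: "Bop 1 (iv 0 3) = iv 0 4 + iv 3 4 + iv 0 3" unfolding s1 Bop_add n1_cols ..
  have p2: "(Bop 1 ^^ (1+1)) f = Bop 1 (Bop 1 f)" for f by (simp add: numeral_2_eq_2)
  have funpow_1: "(Bop 1 ^^ 1) f = Bop 1 f" for f by simp
  have "Q 1 (iv 2 3) = (iv 0 4 + iv 3 4 + iv 0 3) - 2 * iv 0 3 - 2 * Jop 1 (iv 2 3)"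
    unfolding Q_def p2 funpow_1 n1_cols b2 ..
  also have "\<dots> = 0" by (auto simp: Jop_def iv_def fun_eq_iff)
  finally show ?thesis .
qed

lemma Q_e: assumes "n \<ge> 1" "i < 2*n+4" "i \<noteq> n-1" "i \<noteq> n" "i \<noteq> n+3" "i \<noteq> n+4"
  shows "Q n (iv i (Suc i)) = 0"
proof -
  have left: "Q n (iv i (Suc i)) = 0" if "i \<le> n+1" "i \<noteq> n-1" "i \<noteq> n" for i
  proof (cases "n = 1")
    case True
    then have "i = 2" using that by simp
    then show ?thesis using True Q1_b by simp
  next
    case False
    then have n2: "n \<ge> 2" using assms by simp
    have "i = 0 \<or> (1 \<le> i \<and> i \<le> n-2) \<or> i = n+1" using that by arith
    then consider "i = 0" | "1 \<le> i \<and> i \<le> n-2" | "i = n+1" by blast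
    then show ?thesis
    proof cases
      case 1 then show ?thesis using Q_e0[OF n2] by simp
    next
      case 2 then show ?thesis using Q_ei[OF _ _ n2] by simp
    next
      case 3 then show ?thesis using Q_en1[OF n2] by simp
    qed
  qed
  show ?thesis
  proof (cases "i \<le> n+1")
    case True then show ?thesis using left assms by simp
  next
    case False
    define k where "k = 2*n+3-i"
    have k: "k \<le> n+1" "k \<noteq> n-1" "k \<noteq> n" using False assms unfolding k_def by arith+
    have "Jop n (iv k (Suc k)) = iv i (Suc i)"
      using assms False unfolding k_def by (auto simp: Jop_def iv_def fun_eq_iff)
    then have "Q n (iv i (Suc i)) = Jop n (Q n (iv k (Suc k)))" using Q_Jop[OF assms(1)] by metis
    also have "\<dots> = Jop n 0" using left[OF k] by simp
    also have "\<dots> = 0" unfolding Jop_def zero_fun_def by simp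
    finally show ?thesis .
  qed
qed

lemma Q_u_gen: assumes "n \<ge> 1" shows "Q n (iv (n-1) (n+1)) = 0" "Q n (iv (n+3) (n+5)) = 0"
proof -
  show a: "Q n (iv (n-1) (n+1)) = 0"
  proof (cases "n = 1")
    case True
    have e: "n-1 = 0" "n+1 = 2" using True by auto
    show ?thesis unfolding e unfolding True using Q1_a .
  next
    case False then show ?thesis using Q_u assms by simp
  qed
  have "Jop n (iv (n-1) (n+1)) = iv (n+3) (n+5)"
    using assms by (auto simp: Jop_def iv_def fun_eq_iff)
  then have "Q n (iv (n+3) (n+5)) = Jop n (Q n (iv (n-1) (n+1)))" using Q_Jop[OF assms(1)] by metis
  also have "\<dots> = 0" unfolding a Jop_def zero_fun_def by simp
  finally show "Q n (iv (n+3) (n+5)) = 0" .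
qed

lemma Q_iv0: assumes "n \<ge> 1" shows "b \<le> 2*n+4 \<Longrightarrow> b \<noteq> n \<Longrightarrow> b \<noteq> n+4 \<Longrightarrow> Q n (iv 0 b) = 0"
proof (induct b rule: less_induct)
  case (less b)
  show ?case
  proof (cases "b = 0")
    case True
    then have "iv 0 b = 0" by (auto simp: iv_def fun_eq_iff)
    then show ?thesis using Q_zero by metis
  next
    case False
    show ?thesis
    proof (cases "b - 1 = n \<or> b - 1 = n + 4")
      case True
      then have "b = n+1 \<or> b = n+5" using False by arith
      then show ?thesis
      proof
        assume b: "b = n+1"
        have "iv 0 b = iv 0 (n-1) + iv (n-1) (n+1)" using b by (auto simp: iv_def fun_eq_iff)
        moreover have "Q n (iv 0 (n-1)) = 0" by (rule less(1)) (use b assms in arith)+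
        ultimately show ?thesis using Q_u_gen[OF assms] Q_add by (metis add.right_neutral)
      next
        assume b: "b = n+5"
        have "iv 0 b = iv 0 (n+3) + iv (n+3) (n+5)" using b by (auto simp: iv_def fun_eq_iff)
        moreover have "Q n (iv 0 (n+3)) = 0" by (rule less(1)) (use b assms in arith)+
        ultimately show ?thesis using Q_u_gen[OF assms] Q_add by (metis add.right_neutral)
      qed
    next
      case nb: False
      have "iv 0 b = iv 0 (b-1) + iv (b-1) (Suc (b-1))" using False by (auto simp: iv_def fun_eq_iff)
      moreover have "Q n (iv 0 (b-1)) = 0" by (rule less(1)) (use less(2-4) nb False in arith)+
      moreover have "Q n (iv (b-1) (Suc (b-1))) = 0"
        using Q_e[OF assms, of "b-1"] less nb False by arith
      ultimately show ?thesis using Q_add by (metis add.right_neutral)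
    qed
  qed
qed

lemma Q_col: assumes "n \<ge> 1" "j < 2*n+4" shows "Q n (Bop n (iv j (Suc j))) = 0"
proof -
  have "iv (lo n j) (hi n j) = iv 0 (hi n j) - iv 0 (lo n j)"
    using lohi_bounds[OF assms] by (auto simp: iv_def fun_eq_iff)
  then show ?thesis unfolding Bop_col[OF assms(2)] using Q_iv0[OF assms(1)] lohi_bounds[OF assms]
    by (simp add: Q_diff)
qed


definition Bmat :: "nat \<Rightarrow> complex mat" where
  "Bmat n = mat (2*n+4) (2*n+4) (\<lambda>(i,j). if lo n j \<le> i \<and> i < hi n j then 1 else 0)"

definition cf :: "nat \<Rightarrow> complex mat \<Rightarrow> nat \<Rightarrow> nat \<Rightarrow> complex" where
  "cf N X j = (\<lambda>k. if k < N then X $$ (k,j) else 0)"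

lemma Bmat_carrier: "Bmat n \<in> carrier_mat (2*n+4) (2*n+4)"
  unfolding Bmat_def by simp

lemma cf_mult: assumes "n \<ge> 1" "X \<in> carrier_mat (2*n+4) (2*n+4)" "j < 2*n+4"
  shows "cf (2*n+4) (Bmat n * X) j = Bop n (cf (2*n+4) X j)"
proof
  fix k
  show "cf (2*n+4) (Bmat n * X) j k = Bop n (cf (2*n+4) X j) k"
  proof (cases "k < 2*n+4")
    case True
    have "cf (2*n+4) (Bmat n * X) j k = row (Bmat n) k \<bullet> col X j"
      unfolding cf_def using True assms by (simp add: Bmat_def)
    also have "\<dots> = (\<Sum>l\<in>{0..<2*n+4}. (if lo n l \<le> k \<and> k < hi n l then 1 else 0) * X $$ (l,j))"
      unfolding scalar_prod_def using True assms by (intro sum.cong) (auto simp: Bmat_def)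
    also have "\<dots> = Bop n (cf (2*n+4) X j) k"
      unfolding Bop_def cf_def atLeast0LessThan by (intro sum.cong) auto
    finally show ?thesis .
  next
    case False
    have "Bop n (cf (2*n+4) X j) k = 0"
      unfolding Bop_def using False lohi_bounds[OF assms(1)] by (intro sum.neutral) force
    then show ?thesis using False unfolding cf_def by simp
  qed
qed

lemma cf_add: "X \<in> carrier_mat N N \<Longrightarrow> Y \<in> carrier_mat N N \<Longrightarrow> j < N \<Longrightarrow> cf N (X + Y) j = cf N X j + cf N Y j"
  unfolding cf_def by (auto simp: fun_eq_iff)
lemma cf_diff: "X \<in> carrier_mat N N \<Longrightarrow> Y \<in> carrier_mat N N \<Longrightarrow> j < N \<Longrightarrow> cf N (X - Y) j = cf N X j - cf N Y j"
  unfolding cf_def by (auto simp: fun_eq_iff)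
lemma cf_scale: "X \<in> carrier_mat N N \<Longrightarrow> j < N \<Longrightarrow> cf N (2 \<cdot>\<^sub>m X) j = 2 * cf N X j"
  unfolding cf_def by (auto simp: fun_eq_iff)
lemma cf_one: "j < N \<Longrightarrow> cf N (1\<^sub>m N) j = iv j (Suc j)"
  unfolding cf_def iv_def by (auto simp: fun_eq_iff)
lemma cf_J: "j < 2*n+4 \<Longrightarrow> cf (2*n+4) (J n) j = Jop n (iv j (Suc j))"
  unfolding cf_def iv_def J_def Jop_def by (auto simp: fun_eq_iff)

lemma cf_comb: assumes "P1 \<in> carrier_mat N N" "P \<in> carrier_mat N N" "Jm \<in> carrier_mat N N" "j < N"
  shows "cf N (P1 - 2 \<cdot>\<^sub>m P - 2 \<cdot>\<^sub>m Jm) j = cf N P1 j - 2 * cf N P j - 2 * cf N Jm j"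
proof -
  have "cf N (P1 - 2 \<cdot>\<^sub>m P - 2 \<cdot>\<^sub>m Jm) j = cf N (P1 - 2 \<cdot>\<^sub>m P) j - 2 * cf N Jm j"
    using assms by (intro trans[OF cf_diff cf_scale[THEN arg_cong[where f="\<lambda>x. _ - x"]]]) auto
  also have "cf N (P1 - 2 \<cdot>\<^sub>m P) j = cf N P1 j - 2 * cf N P j"
    using assms by (intro trans[OF cf_diff cf_scale[THEN arg_cong[where f="\<lambda>x. _ - x"]]]) auto
  finally show ?thesis .
qed

lemma pow_comm: assumes "X \<in> carrier_mat N N" shows "X ^\<^sub>m k * X = X * X ^\<^sub>m k"
proof (induct k)
  case 0 then show ?case using assms by simp
next
  case (Suc k)
  have "X ^\<^sub>m Suc k * X = (X ^\<^sub>m k * X) * X" by simp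
  also have "\<dots> = (X * X ^\<^sub>m k) * X" using Suc by simp
  also have "\<dots> = X * (X ^\<^sub>m k * X)" using assms by (intro assoc_mult_mat) auto
  finally show ?case by simp
qed

lemma cf_pow: assumes "n \<ge> 1" "j < 2*n+4"
  shows "cf (2*n+4) (Bmat n ^\<^sub>m k) j = (Bop n ^^ k) (iv j (Suc j))"
proof (induct k)
  case 0 then show ?case using cf_one[OF assms(2)] by (simp add: Bmat_def)
next
  case (Suc k)
  have "Bmat n ^\<^sub>m Suc k = Bmat n * Bmat n ^\<^sub>m k"
    using pow_comm[OF Bmat_carrier] by simp
  then show ?case using cf_mult[OF assms(1) _ assms(2), of "Bmat n ^\<^sub>m k"] Suc Bmat_carrier[of n]
    by simp
qed

lemma main_B: assumes "n \<ge> 1"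
  shows "Bmat n * (Bmat n ^\<^sub>m (n+1) - 2 \<cdot>\<^sub>m Bmat n ^\<^sub>m n - 2 \<cdot>\<^sub>m J n) = 0\<^sub>m (2*n+4) (2*n+4)"
proof (rule eq_matI)
  let ?N = "2*n+4"
  have BC: "Bmat n \<in> carrier_mat ?N ?N" by (rule Bmat_carrier)
  have JC: "J n \<in> carrier_mat ?N ?N" unfolding J_def by simp
  have PC: "Bmat n ^\<^sub>m k \<in> carrier_mat ?N ?N" for k using BC by simp
  fix i j assume i: "i < dim_row (0\<^sub>m ?N ?N :: complex mat)" and j: "j < dim_col (0\<^sub>m ?N ?N :: complex mat)"
  then have i': "i < ?N" and j': "j < ?N" by auto
  have XC: "Bmat n ^\<^sub>m (n+1) - 2 \<cdot>\<^sub>m Bmat n ^\<^sub>m n - 2 \<cdot>\<^sub>m J n \<in> carrier_mat ?N ?N"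
    using PC JC by auto
  have "cf ?N (Bmat n * (Bmat n ^\<^sub>m (n+1) - 2 \<cdot>\<^sub>m Bmat n ^\<^sub>m n - 2 \<cdot>\<^sub>m J n)) j
      = Bop n ((Bop n ^^ (n+1)) (iv j (Suc j)) - 2 * (Bop n ^^ n) (iv j (Suc j)) - 2 * Jop n (iv j (Suc j)))"
  proof -
    have "cf ?N (Bmat n ^\<^sub>m (n+1) - 2 \<cdot>\<^sub>m Bmat n ^\<^sub>m n - 2 \<cdot>\<^sub>m J n) j
       = cf ?N (Bmat n ^\<^sub>m (n+1)) j - 2 * cf ?N (Bmat n ^\<^sub>m n) j - 2 * cf ?N (J n) j"
      using PC[of "n+1"] PC[of n] JC j' by (rule cf_comb)
    then show ?thesis unfolding cf_mult[OF assms XC j'] cf_pow[OF assms j'] cf_J[OF j'] by simp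
  qed
  also have "\<dots> = Q n (Bop n (iv j (Suc j)))"
    unfolding Q_def Bop_diff Bop_scale Bop_Jop[OF assms]
    by (simp only: funpow_swap1)
  also have "\<dots> = 0" by (rule Q_col[OF assms j'])
  finally have "cf ?N (Bmat n * (Bmat n ^\<^sub>m (n+1) - 2 \<cdot>\<^sub>m Bmat n ^\<^sub>m n - 2 \<cdot>\<^sub>m J n)) j i = 0"
    by simp
  then show "(Bmat n * (Bmat n ^\<^sub>m (n+1) - 2 \<cdot>\<^sub>m Bmat n ^\<^sub>m n - 2 \<cdot>\<^sub>m J n)) $$ (i, j) = 0\<^sub>m ?N ?N $$ (i, j)"
    using i' j' unfolding cf_def by simp
qed (auto simp: Bmat_def J_def)


lemma kappa_unique:
  assumes n: "n \<ge> 1"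
  shows "\<exists>!k::real. 0 < k \<and> k < 1/2 \<and> (2 + 2*k)^n * k = 1"
proof -
  let ?f = "\<lambda>k::real. (2 + 2*k)^n * k"
  have cont: "continuous_on {0..1/2} ?f" by (intro continuous_intros)
  have f0: "?f 0 = 0" by simp
  have "(3::real)^n \<ge> 3^1" using n by (intro power_increasing) auto
  then have f1: "?f (1/2) \<ge> 3/2" by simp
  obtain x where x: "0 \<le> x" "x \<le> 1/2" "?f x = 1"
    using IVT'[of ?f 0 1 "1/2", OF _ _ _ cont] f0 f1 by auto
  have x0: "x \<noteq> 0" using x f0 by auto
  have x1: "x \<noteq> 1/2"
  proof
    assume h: "x = 1/2"
    have "?f x \<ge> 3/2" using f1 unfolding h .
    then show False using x(3) by simp
  qed
  have mono: "?f a < ?f b" if "0 < a" "a < b" for a b :: real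
  proof -
    have "(2+2*a)^n \<le> (2+2*b)^n" using that by (intro power_mono) auto
    then have "?f a \<le> (2+2*b)^n * a" using that by (intro mult_right_mono) auto
    also have "\<dots> < (2+2*b)^n * b" using that by (intro mult_strict_left_mono) auto
    finally show ?thesis .
  qed
  show ?thesis
  proof (rule ex1I[of _ x])
    show "0 < x \<and> x < 1/2 \<and> ?f x = 1" using x x0 x1 by auto
  next
    fix y assume y: "0 < y \<and> y < 1/2 \<and> ?f y = 1"
    show "y = x"
    proof (rule ccontr)
      assume "y \<noteq> x"
      then have "y < x \<or> x < y" by auto
      then show False using mono[of y x] mono[of x y] x y x0 by auto
    qed
  qed
qed

lemma kappa_props: assumes "n \<ge> 1"
  shows "0 < kappa n" "kappa n < 1/2" "(2 + 2*kappa n)^n * kappa n = 1"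
  using theI'[OF kappa_unique[OF assms]] unfolding kappa_def by auto

lemma T_odd: "paired_tent k (-x) = - paired_tent k x"
proof -
  consider "x < -1/2" | "x = -1/2" | "-1/2 < x \<and> x < 0" | "x = 0" | "0 < x \<and> x < 1/2" | "x = 1/2" | "1/2 < x"
    by linarith
  then show ?thesis
  proof cases
    case 2 then show ?thesis unfolding paired_tent_def by (simp add: algebra_simps)
  next
    case 6 then show ?thesis unfolding paired_tent_def by (simp add: algebra_simps)
  qed (auto simp: paired_tent_def algebra_simps)
qed

lemma Tpow_odd: "(paired_tent k ^^ i) (-x) = - (paired_tent k ^^ i) x"
  by (induct i) (simp_all add: T_odd)

lemma T_img_odd: "paired_tent k ` (uminus ` S) = uminus ` (paired_tent k ` S)"
  by (auto simp: image_iff T_odd)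

lemma aff_img_pos: fixes a b :: real assumes "\<alpha> > 0"
  shows "(\<lambda>x. \<alpha>*x+\<beta>) ` {a<..<b} = {\<alpha>*a+\<beta><..<\<alpha>*b+\<beta>}"
proof
  show "(\<lambda>x. \<alpha>*x+\<beta>) ` {a<..<b} \<subseteq> {\<alpha>*a+\<beta><..<\<alpha>*b+\<beta>}" using assms by auto
  show "{\<alpha>*a+\<beta><..<\<alpha>*b+\<beta>} \<subseteq> (\<lambda>x. \<alpha>*x+\<beta>) ` {a<..<b}"
  proof
    fix y assume y: "y \<in> {\<alpha>*a+\<beta><..<\<alpha>*b+\<beta>}"
    have "(y - \<beta>)/\<alpha> \<in> {a<..<b}" using y assms by (auto simp: field_simps)
    moreover have "y = \<alpha>*((y - \<beta>)/\<alpha>)+\<beta>" using assms by simp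
    ultimately show "y \<in> (\<lambda>x. \<alpha>*x+\<beta>) ` {a<..<b}" by blast
  qed
qed

lemma aff_img_neg: fixes a b :: real assumes "\<alpha> < 0"
  shows "(\<lambda>x. \<alpha>*x+\<beta>) ` {a<..<b} = {\<alpha>*b+\<beta><..<\<alpha>*a+\<beta>}"
proof
  show "(\<lambda>x. \<alpha>*x+\<beta>) ` {a<..<b} \<subseteq> {\<alpha>*b+\<beta><..<\<alpha>*a+\<beta>}" using assms
    by (auto simp: mult_less_cancel_left)
  show "{\<alpha>*b+\<beta><..<\<alpha>*a+\<beta>} \<subseteq> (\<lambda>x. \<alpha>*x+\<beta>) ` {a<..<b}"
  proof
    fix y assume y: "y \<in> {\<alpha>*b+\<beta><..<\<alpha>*a+\<beta>}"
    have "(y - \<beta>)/\<alpha> \<in> {a<..<b}" using y assms by (auto simp: field_simps)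
    moreover have "y = \<alpha>*((y - \<beta>)/\<alpha>)+\<beta>" using assms by simp
    ultimately show "y \<in> (\<lambda>x. \<alpha>*x+\<beta>) ` {a<..<b}" by blast
  qed
qed

definition Pk :: "real \<Rightarrow> nat \<Rightarrow> nat \<Rightarrow> real" where
  "Pk k n i = (if i = 0 then -1 else if i < n then (2+2*k)^i*k - 1 else if i = n then -1/2
     else if i = n+1 then -k else if i = n+2 then 0 else if i = n+3 then k else if i = n+4 then 1/2
     else if i < 2*n+4 then 1 - (2+2*k)^(2*n+4-i)*k else 1)"

context
  fixes n :: nat and k :: real
  assumes n1: "n \<ge> 1" and k0: "0 < k" and k1: "k < 1/2" and kn: "(2+2*k)^n * k = 1"
begin

lemma Pk_0: "Pk k n 0 = -1" using n1 by (simp add: Pk_def)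
lemma Pk_left: "1 \<le> i \<Longrightarrow> i < n \<Longrightarrow> Pk k n i = (2+2*k)^i*k - 1" using n1 by (simp add: Pk_def)
lemma Pk_n: "Pk k n n = -1/2" using n1 by (simp add: Pk_def)
lemma Pk_n1: "Pk k n (n+1) = -k" using n1 by (simp add: Pk_def)
lemma Pk_n2: "Pk k n (n+2) = 0" using n1 by (simp add: Pk_def)
lemma Pk_n3: "Pk k n (n+3) = k" using n1 by (simp add: Pk_def)
lemma Pk_n4: "Pk k n (n+4) = 1/2" using n1 by (simp add: Pk_def)
lemma Pk_right: "n+4 < i \<Longrightarrow> i < 2*n+4 \<Longrightarrow> Pk k n i = 1 - (2+2*k)^(2*n+4-i)*k" using n1 by (simp add: Pk_def)
lemma Pk_N: "Pk k n (2*n+4) = 1" using n1 by (simp add: Pk_def)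

lemma cpow_lt: assumes "i \<le> n - 1" shows "(2+2*k)^i * k < 1/2"
proof -
  have "(2+2*k)^(n-1) * k * (2+2*k) = 1" using kn n1
    by (metis mult.commute mult.left_commute power_minus_mult not_one_le_zero le_zero_eq
        power_Suc Suc_diff_1 less_one not_less)
  then have e: "(2+2*k)^(n-1) * k = 1 / (2+2*k)" using k0 by (simp add: field_simps)
  have "1 / (2+2*k) < 1/2" using k0 by (simp add: field_simps)
  moreover have "(2+2*k)^i * k \<le> (2+2*k)^(n-1) * k"
    using assms k0 by (intro mult_right_mono power_increasing) auto
  ultimately show ?thesis using e by simp
qed

lemma Pk_sym: assumes "i \<le> 2*n+4" shows "Pk k n (2*n+4-i) = - Pk k n i"
proof -
  have "i = 0 \<or> (1 \<le> i \<and> i < n) \<or> i = n \<or> i = n+1 \<or> i = n+2 \<or> i = n+3 \<or> i = n+4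
     \<or> (n+4 < i \<and> i < 2*n+4) \<or> i = 2*n+4" using assms by arith
  then consider "i = 0" | "1 \<le> i \<and> i < n" | "i = n" | "i = n+1" | "i = n+2" | "i = n+3" | "i = n+4"
     | "n+4 < i \<and> i < 2*n+4" | "i = 2*n+4" by blast
  then show ?thesis
  proof cases
    case 1 then show ?thesis using Pk_0 Pk_N by simp
  next
    case 2
    have a: "n+4 < 2*n+4-i" "2*n+4-i < 2*n+4" "2*n+4-(2*n+4-i) = i" using 2 by arith+
    show ?thesis using Pk_right[OF a(1,2)] Pk_left[of i] 2 unfolding a(3) by simp
  next
    case 3
    have a: "2*n+4-i = n+4" using 3 by simp
    show ?thesis unfolding a using 3 Pk_n Pk_n4 by simp
  next
    case 4
    have a: "2*n+4-i = n+3" using 4 by simp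
    show ?thesis unfolding a using 4 Pk_n1 Pk_n3 by simp
  next
    case 5
    have a: "2*n+4-i = n+2" using 5 by simp
    show ?thesis unfolding a using 5 Pk_n2 by simp
  next
    case 6
    have a: "2*n+4-i = n+1" using 6 by simp
    show ?thesis unfolding a using 6 Pk_n1 Pk_n3 by simp
  next
    case 7
    have a: "2*n+4-i = n" using 7 by simp
    show ?thesis unfolding a using 7 Pk_n Pk_n4 by simp
  next
    case 8
    have a: "1 \<le> 2*n+4-i" "2*n+4-i < n" using 8 by arith+
    show ?thesis using Pk_left[OF a] Pk_right[of i] 8 by simp
  next
    case 9 then show ?thesis using Pk_0 Pk_N by simp
  qed
qed

lemma Pk_step_left: assumes "i \<le> n+1" shows "Pk k n i < Pk k n (Suc i)"
proof -
  have "(i = 0 \<and> n = 1) \<or> (i = 0 \<and> n \<ge> 2) \<or> (1 \<le> i \<and> Suc i < n) \<or> (1 \<le> i \<and> Suc i = n) \<or> i = n \<or> i = n+1"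
    using assms n1 by arith
  then consider "i = 0 \<and> n = 1" | "i = 0 \<and> n \<ge> 2" | "1 \<le> i \<and> Suc i < n" | "1 \<le> i \<and> Suc i = n"
    | "i = n" | "i = n+1" by blast
  then show ?thesis
  proof cases
    case 1 then show ?thesis using Pk_0 Pk_n by simp
  next
    case 2
    then have "Pk k n (Suc i) = (2+2*k)*k - 1" using Pk_left[of 1] by simp
    then show ?thesis using 2 Pk_0 k0 by simp
  next
    case 3
    have "(2+2*k)^i*k < (2+2*k)^(Suc i)*k" using k0 by (intro mult_strict_right_mono power_strict_increasing) auto
    then show ?thesis using 3 Pk_left[of i] Pk_left[of "Suc i"] by simp
  next
    case 4
    have "i \<le> n - 1" using 4 by arith
    then have "(2+2*k)^i*k < 1/2" by (rule cpow_lt)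
    then show ?thesis using 4 Pk_left[of i] Pk_n by simp
  next
    case 5 then show ?thesis using Pk_n Pk_n1 k1 by simp
  next
    case 6 then show ?thesis using Pk_n1 Pk_n2 k0 by simp
  qed
qed

lemma Pk_step: assumes "i < 2*n+4" shows "Pk k n i < Pk k n (Suc i)"
proof (cases "i \<le> n+1")
  case True then show ?thesis by (rule Pk_step_left)
next
  case False
  define m where "m = 2*n+3-i"
  have m: "m \<le> n+1" "2*n+4 - m = Suc i" "2*n+4 - Suc m = i" using False assms unfolding m_def by arith+
  have "Pk k n m < Pk k n (Suc m)" by (rule Pk_step_left[OF m(1)])
  moreover have "Pk k n (Suc i) = - Pk k n m" using Pk_sym[of m] m by simp
  moreover have "Pk k n i = - Pk k n (Suc m)" using Pk_sym[of "Suc m"] m by simp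
  ultimately show ?thesis by simp
qed

lemma Pk_mono: assumes "i < j" "j \<le> 2*n+4" shows "Pk k n i < Pk k n j"
  using assms
proof (induct j)
  case 0 then show ?case by simp
next
  case (Suc j)
  show ?case
  proof (cases "i = j")
    case True then show ?thesis using Pk_step[of j] Suc by simp
  next
    case False
    then have "Pk k n i < Pk k n j" using Suc by simp
    also have "\<dots> < Pk k n (Suc j)" using Pk_step[of j] Suc by simp
    finally show ?thesis .
  qed
qed

lemma Pk_le_iff: assumes "a \<le> 2*n+4" "b \<le> 2*n+4" shows "Pk k n a \<le> Pk k n b \<longleftrightarrow> a \<le> b"
proof
  assume "Pk k n a \<le> Pk k n b"
  then show "a \<le> b" using Pk_mono[of b a] assms by (metis not_le)
next
  assume "a \<le> b"
  then show "Pk k n a \<le> Pk k n b" using Pk_mono[of a b] assms by (cases "a = b") auto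
qed

lemma orbit_neg: assumes "1 \<le> i" "i \<le> n - 1" shows "(paired_tent k ^^ i) (-k) = (2+2*k)^i*k - 1"
  using assms
proof (induct i rule: dec_induct)
  case base
  have "-1/2 < -k" "-k < 0" using k0 k1 by auto
  then show ?case by (simp add: paired_tent_def algebra_simps)
next
  case (step m)
  have "m \<le> n - 1" using step by simp
  then have "(2+2*k)^m*k < 1/2" by (rule cpow_lt)
  then have "(2+2*k)^m*k - 1 \<le> -1/2" by simp
  then show ?case using step by (simp add: paired_tent_def algebra_simps)
qed

lemma part_set:
  "{-1, -1/2, 0, 1/2, 1} \<union> {(paired_tent k ^^ i) k | i. i < n} \<union> {(paired_tent k ^^ i) (-k) | i. i < n}
    = Pk k n ` {0..2*n+4}"
proof
  show "{-1, -1/2, 0, 1/2, 1} \<union> {(paired_tent k ^^ i) k | i. i < n} \<union> {(paired_tent k ^^ i) (-k) | i. i < n}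
    \<subseteq> Pk k n ` {0..2*n+4}"
  proof -
    have a: "{-1, -1/2, 0, 1/2, 1} \<subseteq> Pk k n ` {0..2*n+4}"
    proof -
      have "Pk k n 0 \<in> Pk k n ` {0..2*n+4}" "Pk k n n \<in> Pk k n ` {0..2*n+4}"
        "Pk k n (n+2) \<in> Pk k n ` {0..2*n+4}" "Pk k n (n+4) \<in> Pk k n ` {0..2*n+4}"
        "Pk k n (2*n+4) \<in> Pk k n ` {0..2*n+4}" by auto
      then show ?thesis using Pk_0 Pk_n Pk_n2 Pk_n4 Pk_N by auto
    qed
    have b: "(paired_tent k ^^ i) (-k) \<in> Pk k n ` {0..2*n+4}" if "i < n" for i
    proof (cases "i = 0")
      case True
      show ?thesis using True Pk_n1 by (intro image_eqI[where x="n+1"]) auto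
    next
      case False
      have "Pk k n i \<in> Pk k n ` {0..2*n+4}" using that by auto
      then show ?thesis using False that orbit_neg[of i] Pk_left[of i] by simp
    qed
    have c: "(paired_tent k ^^ i) k \<in> Pk k n ` {0..2*n+4}" if "i < n" for i
    proof (cases "i = 0")
      case True
      show ?thesis using True Pk_n3 by (intro image_eqI[where x="n+3"]) auto
    next
      case False
      have "Pk k n (2*n+4-i) \<in> Pk k n ` {0..2*n+4}" using that by auto
      moreover have "(paired_tent k ^^ i) k = - (paired_tent k ^^ i) (-k)" using Tpow_odd[where k=k and i=i and x="-k"] by simp
      moreover have "Pk k n (2*n+4-i) = - Pk k n i" using Pk_sym[of i] that by simp
      ultimately show ?thesis using False that orbit_neg[of i] Pk_left[of i] by simp
    qed
    show ?thesis using a b c by blast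
  qed
next
  show "Pk k n ` {0..2*n+4} \<subseteq> {-1, -1/2, 0, 1/2, 1} \<union> {(paired_tent k ^^ i) k | i. i < n} \<union> {(paired_tent k ^^ i) (-k) | i. i < n}"
  proof
    fix y assume "y \<in> Pk k n ` {0..2*n+4}"
    then obtain m where m: "m \<le> 2*n+4" "y = Pk k n m" by auto
    have "m = 0 \<or> (1 \<le> m \<and> m < n) \<or> m = n \<or> m = n+1 \<or> m = n+2 \<or> m = n+3 \<or> m = n+4
     \<or> (n+4 < m \<and> m < 2*n+4) \<or> m = 2*n+4" using m by arith
    then consider "m = 0" | "1 \<le> m \<and> m < n" | "m = n" | "m = n+1" | "m = n+2" | "m = n+3" | "m = n+4"
     | "n+4 < m \<and> m < 2*n+4" | "m = 2*n+4" by blast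
    then show "y \<in> {-1, -1/2, 0, 1/2, 1} \<union> {(paired_tent k ^^ i) k | i. i < n} \<union> {(paired_tent k ^^ i) (-k) | i. i < n}"
    proof cases
      case 1 then show ?thesis using m Pk_0 by simp
    next
      case 2
      then have mm: "m \<le> n - 1" by arith
      have "y = (paired_tent k ^^ m) (-k)" using 2 m orbit_neg[OF _ mm] Pk_left[of m] by simp
      then show ?thesis using 2 by blast
    next
      case 3 then show ?thesis using m Pk_n by simp
    next
      case 4
      then have "y = (paired_tent k ^^ 0) (-k)" using m Pk_n1 by simp
      moreover have "(0::nat) < n" using n1 by simp
      ultimately show ?thesis by blast
    next
      case 5 then show ?thesis using m Pk_n2 by simp
    next
      case 6
      then have "y = (paired_tent k ^^ 0) k" using m Pk_n3 by simp
      moreover have "(0::nat) < n" using n1 by simp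
      ultimately show ?thesis by blast
    next
      case 7 then show ?thesis using m Pk_n4 by simp
    next
      case 8
      define i where "i = 2*n+4-m"
      have i: "1 \<le> i" "i < n" "m = 2*n+4-i" using 8 unfolding i_def by arith+
      have "Pk k n m = - Pk k n i" using Pk_sym[of i] i by simp
      moreover have "(paired_tent k ^^ i) k = - (paired_tent k ^^ i) (-k)" using Tpow_odd[where k=k and i=i and x="-k"] by simp
      ultimately have "y = (paired_tent k ^^ i) k" using m i orbit_neg[of i] Pk_left[of i] by simp
      then show ?thesis using i by blast
    next
      case 9 then show ?thesis using m Pk_N by simp
    qed
  qed
qed

lemma lap1_val: assumes "i \<le> n" shows "2*(1+k)*(Pk k n i + 1) - 1 = Pk k n (Fm n i)"
proof -
  have "i = 0 \<or> (1 \<le> i \<and> Suc i < n) \<or> (1 \<le> i \<and> Suc i = n) \<or> (i = n \<and> i \<noteq> 0)" using assms n1 by arith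
  then consider "i = 0" | "1 \<le> i \<and> Suc i < n" | "1 \<le> i \<and> Suc i = n" | "i = n \<and> i \<noteq> 0" by blast
  then show ?thesis
  proof cases
    case 1 then show ?thesis using Pk_0 by (simp add: Fm_def)
  next
    case 2
    then have "i \<noteq> n - 1" "i \<noteq> 0" "i \<noteq> n" by arith+
    then have f: "Fm n i = Suc i" by (simp add: Fm_def)
    show ?thesis unfolding f using 2 Pk_left[of i] Pk_left[of "Suc i"] by (simp add: algebra_simps)
  next
    case 3
    then have "i = n - 1" "i \<noteq> 0" "i \<noteq> n" by arith+
    then have f: "Fm n i = n+2" by (simp add: Fm_def)
    have "2*(1+k)*((2+2*k)^i*k) = (2+2*k)^n * k" using 3 by (auto simp: algebra_simps)
    then show ?thesis unfolding f using 3 Pk_left[of i] Pk_n2 kn by (simp add: algebra_simps)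
  next
    case 4
    then have f: "Fm n i = n+3" by (simp add: Fm_def)
    show ?thesis unfolding f using 4 Pk_n Pk_n3 by (simp add: algebra_simps)
  qed
qed

lemma lap2_val: assumes "i = n \<or> i = n+1 \<or> i = n+2" shows "-2*(1+k)*Pk k n i - 1 = Pk k n (Gm n i)"
proof -
  consider "i = n" | "i = n+1 \<and> n = 1" | "i = n+1 \<and> n \<noteq> 1" | "i = n+2" using assms by blast
  then show ?thesis
  proof cases
    case 1 then show ?thesis using Pk_n Pk_n3 by (simp add: Gm_def algebra_simps)
  next
    case 2
    then have "(2+2*k)*k = 1" using kn by simp
    moreover have g: "Gm n i = n+2" using 2 by (simp add: Gm_def)
    ultimately show ?thesis unfolding g using 2 Pk_n1 Pk_n2 by (simp add: algebra_simps)
  next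
    case 3
    then have "Pk k n 1 = (2+2*k)*k - 1" using Pk_left[of 1] n1 by simp
    then show ?thesis using 3 Pk_n1 by (simp add: Gm_def algebra_simps)
  next
    case 4 then show ?thesis using Pk_n2 Pk_0 by (simp add: Gm_def algebra_simps)
  qed
qed

lemma img_left: assumes "j < n+2"
  shows "paired_tent k ` {Pk k n j<..<Pk k n (Suc j)} = {Pk k n (lo0 n j)<..<Pk k n (hi0 n j)}"
proof (cases "j < n")
  case True
  have eq: "paired_tent k x = (2+2*k)*x + (1+2*k)" if "x \<in> {Pk k n j<..<Pk k n (Suc j)}" for x
  proof -
    have "Pk k n (Suc j) \<le> Pk k n n" using Pk_le_iff[of "Suc j" n] True by simp
    then have "x \<le> -1/2" using that Pk_n by simp
    then show ?thesis by (simp add: paired_tent_def algebra_simps)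
  qed
  have "paired_tent k ` {Pk k n j<..<Pk k n (Suc j)} = (\<lambda>x. (2+2*k)*x + (1+2*k)) ` {Pk k n j<..<Pk k n (Suc j)}"
    using eq by (rule image_cong[OF refl])
  also have "\<dots> = {(2+2*k)*Pk k n j + (1+2*k)<..<(2+2*k)*Pk k n (Suc j) + (1+2*k)}"
    using k0 by (intro aff_img_pos) simp
  also have "\<dots> = {Pk k n (Fm n j)<..<Pk k n (Fm n (Suc j))}"
    using lap1_val[of j] lap1_val[of "Suc j"] True by (simp add: algebra_simps)
  finally show ?thesis using True by (simp add: lo0_def hi0_def)
next
  case False
  then have j: "j = n \<or> j = n+1" using assms by arith
  have eq: "paired_tent k x = (-(2+2*k))*x + (-1)" if "x \<in> {Pk k n j<..<Pk k n (Suc j)}" for x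
  proof -
    have "Pk k n n \<le> Pk k n j" "Pk k n (Suc j) \<le> Pk k n (n+2)"
      using Pk_le_iff[of n j] Pk_le_iff[of "Suc j" "n+2"] j by auto
    then have "-1/2 < x" "x < 0" using that Pk_n Pk_n2 by auto
    then show ?thesis by (simp add: paired_tent_def algebra_simps)
  qed
  have "paired_tent k ` {Pk k n j<..<Pk k n (Suc j)} = (\<lambda>x. (-(2+2*k))*x + (-1)) ` {Pk k n j<..<Pk k n (Suc j)}"
    using eq by (rule image_cong[OF refl])
  also have "\<dots> = {(-(2+2*k))*Pk k n (Suc j) + (-1)<..<(-(2+2*k))*Pk k n j + (-1)}"
    using k0 by (intro aff_img_neg) simp
  also have "\<dots> = {Pk k n (Gm n (Suc j))<..<Pk k n (Gm n j)}"
    using lap2_val[of j] lap2_val[of "Suc j"] j by (auto simp: algebra_simps)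
  finally show ?thesis using j by (auto simp: lo0_def hi0_def)
qed

lemma img: assumes "j < 2*n+4"
  shows "paired_tent k ` {Pk k n j<..<Pk k n (Suc j)} = {Pk k n (lo n j)<..<Pk k n (hi n j)}"
proof (cases "j < n+2")
  case True then show ?thesis using img_left[OF True] by (simp add: lo_def hi_def)
next
  case False
  define j' where "j' = 2*n+3-j"
  have j': "j' < n+2" "2*n+4 - Suc j' = j" "2*n+4 - j' = Suc j" using False assms unfolding j'_def by arith+
  have b: "lo0 n j' \<le> 2*n+4" "hi0 n j' \<le> 2*n+4" using lohi0_le[of n j'] by auto
  have S: "{Pk k n j<..<Pk k n (Suc j)} = uminus ` {Pk k n j'<..<Pk k n (Suc j')}"
    using Pk_sym[of "Suc j'"] Pk_sym[of j'] j' by simp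
  have "paired_tent k ` {Pk k n j<..<Pk k n (Suc j)} = uminus ` {Pk k n (lo0 n j')<..<Pk k n (hi0 n j')}"
    unfolding S T_img_odd img_left[OF j'(1)] ..
  also have "\<dots> = {Pk k n (2*n+4 - hi0 n j')<..<Pk k n (2*n+4 - lo0 n j')}"
    using Pk_sym[OF b(1)] Pk_sym[OF b(2)] by simp
  finally show ?thesis using False unfolding lo_def hi_def j'_def by simp
qed

lemma incl_iff: assumes "Suc i \<le> 2*n+4" "a \<le> 2*n+4" "b \<le> 2*n+4"
  shows "{Pk k n i<..<Pk k n (Suc i)} \<subseteq> {Pk k n a<..<Pk k n b} \<longleftrightarrow> a \<le> i \<and> Suc i \<le> b"
proof -
  have "Pk k n i < Pk k n (Suc i)" using Pk_step[of i] assms by simp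
  then have "{Pk k n i<..<Pk k n (Suc i)} \<subseteq> {Pk k n a<..<Pk k n b} \<longleftrightarrow> Pk k n a \<le> Pk k n i \<and> Pk k n (Suc i) \<le> Pk k n b"
    by (simp add: greaterThanLessThan_subseteq_greaterThanLessThan)
  also have "\<dots> \<longleftrightarrow> a \<le> i \<and> Suc i \<le> b" using Pk_le_iff[of a i] Pk_le_iff[of "Suc i" b] assms by simp
  finally show ?thesis .
qed

end

lemma r_eq: assumes n: "n \<ge> 1" and i: "i \<le> 2*n+4" shows "r n i = Pk (kappa n) n i"
proof -
  note kp = kappa_props[OF n]
  let ?P = "Pk (kappa n) n"
  have pp: "partition_pts n = ?P ` {0..2*n+4}"
    unfolding partition_pts_def Tn_def using part_set[OF n kp] .
  have s1: "sorted_wrt (<) (map ?P [0..<Suc (2*n+4)])"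
    unfolding sorted_wrt_map
    by (rule sorted_wrt_mono_rel[OF _ sorted_wrt_upt]) (auto intro: Pk_mono[OF n kp])
  have s2: "sorted_wrt (<) (sorted_list_of_set (partition_pts n))"
    by (rule strict_sorted_list_of_set)
  have "set (map ?P [0..<Suc (2*n+4)]) = ?P ` {0..2*n+4}"
    unfolding set_map set_upt atLeastLessThanSuc_atLeastAtMost ..
  then have "sorted_list_of_set (partition_pts n) = map ?P [0..<Suc (2*n+4)]"
    using strict_sorted_equal[OF s1 s2] pp by simp
  then show ?thesis unfolding r_def using i by (simp del: upt_Suc)
qed

lemma A_eq: assumes n: "n \<ge> 1" shows "A n = Bmat n"
proof (rule eq_matI)
  note kp = kappa_props[OF n]
  let ?P = "Pk (kappa n) n"
  fix i j assume i: "i < dim_row (Bmat n)" and j: "j < dim_col (Bmat n)"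
  then have i': "i < 2*n+4" and j': "j < 2*n+4" by (auto simp: Bmat_def)
  have Ri: "R n (i+1) = {?P i<..<?P (Suc i)}" unfolding R_def using i' r_eq[OF n, of i] r_eq[OF n, of "Suc i"] by simp
  have Rj: "R n (j+1) = {?P j<..<?P (Suc j)}" unfolding R_def using j' r_eq[OF n, of j] r_eq[OF n, of "Suc j"] by simp
  have "Tn n ` R n (j+1) = {?P (lo n j)<..<?P (hi n j)}" unfolding Rj Tn_def by (rule img[OF n kp j'])
  then have "R n (i+1) \<subseteq> Tn n ` R n (j+1) \<longleftrightarrow> lo n j \<le> i \<and> Suc i \<le> hi n j"
    unfolding Ri using incl_iff[OF n kp, of i "lo n j" "hi n j"] i' lohi_bounds[OF n j'] by simp
  then show "A n $$ (i, j) = Bmat n $$ (i, j)" using i' j' unfolding A_def Bmat_def by simp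
qed (auto simp: A_def Bmat_def)

theorem lemma6:
  fixes n :: nat
  assumes "n \<ge> 1"
  shows "A n * (A n ^\<^sub>m (n+1) - 2 \<cdot>\<^sub>m A n ^\<^sub>m n - 2 \<cdot>\<^sub>m J n)
           = 0\<^sub>m (2*n+4) (2*n+4)"
  unfolding A_eq[OF assms] by (rule main_B[OF assms])

end
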